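(* Let $\Omega\subset\mathbb R^d$ be a bounded Borel set, $f:\Omega\to[0,\infty)$ with $\int_\Omega f=1$, $p\ge1$, $x_1,\dots,x_k\in\Omega$, and $h_1,\dots,h_k:[0,1]\to[0,\infty)$ strictly increasing. Let $(A_i)_{i=1}^k$ be an equilibrium and let $(B_i)_{i=1}^k$ be a partition of $\Omega$ with $C(x,(B_i)_i)\le C(x,(A_i)_i)$ for $f$-a.e. $x\in\Omega$. Then $A_i=B_i$ up to $f$-negligible sets for every $i$.
   Context: A partition of $\Omega$ is a family of Borel sets pairwise disjoint up to $f$-negligible sets whose union has full $f\,dx$-measure. For a partition $(B_i)_{i=1}^k$, $C(x,(B_i)_i)=\sum_{i=1}^k[|x-x_i|^p+h_i(\int_{B_i}f\,dx)]\mathbf 1_{B_i}(x)$. A partition $(A_i)$ is an equilibrium if, with $c_j=\int_{A_j}f$, for every $i$: $A_i=\{x:|x-x_i|^p+h_i(c_i)<|x-x_j|^p+h_j(c_j)\ \forall j\ne i\}$ up to $f$-negligible sets. *)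

theory Defs
  imports "HOL-Analysis.Analysis"
begin

text \<open>The measure f dx restricted to Omega (f is only given on Omega).\<close>
definition fmeasure :: "'a::euclidean_space set \<Rightarrow> ('a \<Rightarrow> real) \<Rightarrow> 'a measure" where
  "fmeasure \<Omega> f = density lebesgue (\<lambda>x. ennreal (indicator \<Omega> x * f x))"

definition f_negligible :: "'a::euclidean_space set \<Rightarrow> ('a \<Rightarrow> real) \<Rightarrow> 'a set \<Rightarrow> bool" where
  "f_negligible \<Omega> f N \<longleftrightarrow> N \<in> null_sets (fmeasure \<Omega> f)"

definition f_ae_eq :: "'a::euclidean_space set \<Rightarrow> ('a \<Rightarrow> real) \<Rightarrow> 'a set \<Rightarrow> 'a set \<Rightarrow> bool" where
  "f_ae_eq \<Omega> f A B \<longleftrightarrow> f_negligible \<Omega> f ((A - B) \<union> (B - A))"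

definition is_partition ::
  "'a::euclidean_space set \<Rightarrow> ('a \<Rightarrow> real) \<Rightarrow> nat \<Rightarrow> (nat \<Rightarrow> 'a set) \<Rightarrow> bool" where
  "is_partition \<Omega> f k B \<longleftrightarrow>
     (\<forall>i<k. B i \<in> sets borel) \<and>
     (\<forall>i<k. \<forall>j<k. i \<noteq> j \<longrightarrow> f_negligible \<Omega> f (B i \<inter> B j)) \<and>
     f_negligible \<Omega> f (\<Omega> - (\<Union>i<k. B i))"

definition mass :: "'a::euclidean_space set \<Rightarrow> ('a \<Rightarrow> real) \<Rightarrow> 'a set \<Rightarrow> real" where
  "mass \<Omega> f S = set_lebesgue_integral lebesgue (S \<inter> \<Omega>) f"

definition cost ::
  "'a::euclidean_space set \<Rightarrow> ('a \<Rightarrow> real) \<Rightarrow> real \<Rightarrow> nat \<Rightarrow> (nat \<Rightarrow> 'a) \<Rightarrow> (nat \<Rightarrow> real \<Rightarrow> real)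
    \<Rightarrow> (nat \<Rightarrow> 'a set) \<Rightarrow> 'a \<Rightarrow> real" where
  "cost \<Omega> f p k xs h B x =
     (\<Sum>i<k. (norm (x - xs i) powr p + h i (mass \<Omega> f (B i))) * indicator (B i) x)"

definition is_equilibrium ::
  "'a::euclidean_space set \<Rightarrow> ('a \<Rightarrow> real) \<Rightarrow> real \<Rightarrow> nat \<Rightarrow> (nat \<Rightarrow> 'a) \<Rightarrow> (nat \<Rightarrow> real \<Rightarrow> real)
    \<Rightarrow> (nat \<Rightarrow> 'a set) \<Rightarrow> bool" where
  "is_equilibrium \<Omega> f p k xs h A \<longleftrightarrow>
     is_partition \<Omega> f k A \<and>
     (\<forall>i<k. f_ae_eq \<Omega> f (A i)
        {x. \<forall>j<k. j \<noteq> i \<longrightarrow>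
            norm (x - xs i) powr p + h i (mass \<Omega> f (A i))
              < norm (x - xs j) powr p + h j (mass \<Omega> f (A j))})"

end

theory Submission
  imports Defs
begin

lemma fm_emeasure:
  fixes \<Omega> :: "'a::euclidean_space set" and f :: "'a \<Rightarrow> real"
  assumes O: "\<Omega> \<in> sets borel" and nn: "\<forall>x\<in>\<Omega>. f x \<ge> 0"
    and int: "set_integrable lebesgue \<Omega> f" and S: "S \<in> sets lebesgue"
  shows "emeasure (fmeasure \<Omega> f) S = ennreal (mass \<Omega> f S)" and "mass \<Omega> f S \<ge> 0"
proof -
  have Ol: "\<Omega> \<in> sets lebesgue" using O by simp
  have "(\<lambda>x. indicator \<Omega> x *\<^sub>R f x) \<in> borel_measurable lebesgue"
    using int unfolding set_integrable_def by (rule borel_measurable_integrable)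
  hence meas: "(\<lambda>x. ennreal (indicator \<Omega> x * f x)) \<in> borel_measurable lebesgue" by simp
  have SO: "S \<inter> \<Omega> \<in> sets lebesgue" using S Ol by auto
  have i2: "set_integrable lebesgue (S \<inter> \<Omega>) f"
    by (rule set_integrable_subset[OF int SO]) auto
  hence i3: "integrable lebesgue (\<lambda>x. indicator (S \<inter> \<Omega>) x * f x)"
    unfolding set_integrable_def by simp
  have pos: "\<And>x. 0 \<le> indicator (S \<inter> \<Omega>) x * f x" using nn by (auto simp: indicator_def)
  have "emeasure (fmeasure \<Omega> f) S = (\<integral>\<^sup>+ x. ennreal (indicator \<Omega> x * f x) * indicator S x \<partial>lebesgue)"
    unfolding fmeasure_def by (rule emeasure_density[OF meas S])
  also have "\<dots> = (\<integral>\<^sup>+ x. ennreal (indicator (S \<inter> \<Omega>) x * f x) \<partial>lebesgue)"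
    by (rule nn_integral_cong) (auto simp: indicator_def)
  also have "\<dots> = ennreal (integral\<^sup>L lebesgue (\<lambda>x. indicator (S \<inter> \<Omega>) x * f x))"
    by (rule nn_integral_eq_integral[OF i3]) (simp add: pos)
  also have "integral\<^sup>L lebesgue (\<lambda>x. indicator (S \<inter> \<Omega>) x * f x) = mass \<Omega> f S"
    unfolding mass_def set_lebesgue_integral_def by simp
  finally show "emeasure (fmeasure \<Omega> f) S = ennreal (mass \<Omega> f S)" .
  show "mass \<Omega> f S \<ge> 0" unfolding mass_def set_lebesgue_integral_def
    using pos by (simp add: integral_nonneg)
qed

lemma AE_point:
  assumes "AE x in M. P x" "S \<in> sets M" "emeasure M S \<noteq> 0"
  shows "\<exists>x\<in>S. P x"
proof (rule ccontr)
  assume nt: "\<not> ?thesis"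
  obtain N where N: "{x\<in>space M. \<not> P x} \<subseteq> N" "emeasure M N = 0" "N \<in> sets M"
    using AE_E[OF assms(1)] by blast
  have "S \<subseteq> N" using N(1) nt sets.sets_into_space[OF assms(2)] by auto
  hence "emeasure M S \<le> emeasure M N" using N(3) by (intro emeasure_mono) auto
  thus False using N(2) assms(3) by auto
qed

lemma smono_le:
  assumes "strict_mono_on {0..1} g" "a \<in> {0..1}" "b \<in> {0..1::real}" "g b \<le> (g a :: real)"
  shows "b \<le> a"
proof (rule ccontr)
  assume "\<not> b \<le> a" hence "a < b" by simp
  hence "g a < g b" using assms(1-3) by (auto simp: strict_mono_on_def)
  thus False using assms(4) by simp
qed

lemma smono_lt:
  assumes "strict_mono_on {0..1} g" "a \<in> {0..1}" "b \<in> {0..1::real}" "g b < (g a :: real)"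
  shows "b < a"
proof (rule ccontr)
  assume "\<not> b < a" hence "a < b \<or> a = b" by auto
  hence "g a \<le> g b" using assms(1-3) by (auto simp: strict_mono_on_def less_imp_le)
  thus False using assms(4) by simp
qed

lemma sum_single:
  assumes "i < (k::nat)" "\<forall>l<k. l \<noteq> i \<longrightarrow> x \<notin> B l" "x \<in> B i"
  shows "(\<Sum>l<k. c l * indicator (B l) x) = (c i :: real)"
proof -
  have "(\<Sum>l<k. c l * indicator (B l) x) = (\<Sum>l<k. if l = i then c i else 0)"
    using assms by (intro sum.cong) (auto simp: indicator_def)
  also have "\<dots> = c i" using assms(1) by (simp add: sum.delta' lessThan_iff)
  finally show ?thesis .
qed

theorem proposition4p9:
  fixes \<Omega> :: "'a::euclidean_space set" and f :: "'a \<Rightarrow> real" and p :: real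
    and k :: nat and xs :: "nat \<Rightarrow> 'a" and h :: "nat \<Rightarrow> real \<Rightarrow> real"
    and A B :: "nat \<Rightarrow> 'a set"
  assumes "\<Omega> \<in> sets borel" and "bounded \<Omega>"
    and "\<forall>x\<in>\<Omega>. f x \<ge> 0"
    and "set_integrable lebesgue \<Omega> f"
    and "set_lebesgue_integral lebesgue \<Omega> f = 1"
    and "p \<ge> 1"
    and "\<forall>i<k. xs i \<in> \<Omega>"
    and "\<forall>i<k. strict_mono_on {0..1} (h i) \<and> (\<forall>t\<in>{0..1}. h i t \<ge> 0)"
    and "is_equilibrium \<Omega> f p k xs h A"
    and "is_partition \<Omega> f k B"
    and "AE x in fmeasure \<Omega> f. cost \<Omega> f p k xs h B x \<le> cost \<Omega> f p k xs h A x"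
  shows "\<forall>i<k. f_ae_eq \<Omega> f (A i) (B i)"
proof -
  note O = assms(1) and nn = assms(3) and int = assms(4)
  define M where "M = fmeasure \<Omega> f"
  have setsM: "sets M = sets lebesgue" unfolding M_def fmeasure_def by simp
  have spaceM: "space M = UNIV" unfolding M_def fmeasure_def by simp
  have em: "\<And>S. S \<in> sets lebesgue \<Longrightarrow> emeasure M S = ennreal (mass \<Omega> f S) \<and> mass \<Omega> f S \<ge> 0"
    unfolding M_def using fm_emeasure[OF O nn int] by blast
  have "mass \<Omega> f UNIV = 1" using assms(5) unfolding mass_def by simp
  hence emU: "emeasure M UNIV = 1" using em[of UNIV] by simp
  interpret finite_measure M by (rule finite_measureI) (simp add: spaceM emU)
  have mU: "measure M UNIV = 1" using emU by (simp add: measure_def)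
  have ms: "\<And>S. S \<in> sets lebesgue \<Longrightarrow> measure M S = mass \<Omega> f S \<and> mass \<Omega> f S \<in> {0..1}"
  proof -
    fix S :: "'a set" assume S: "S \<in> sets lebesgue"
    have e: "emeasure M S = ennreal (mass \<Omega> f S)" and p0: "mass \<Omega> f S \<ge> 0" using em[OF S] by auto
    have "emeasure M S \<le> emeasure M UNIV" by (rule emeasure_mono) (auto simp: setsM)
    hence "ennreal (mass \<Omega> f S) \<le> 1" using e emU by simp
    hence "mass \<Omega> f S \<le> 1" by (simp add: ennreal_le_1)
    moreover have "measure M S = mass \<Omega> f S" using e p0 by (simp add: measure_def)
    ultimately show "measure M S = mass \<Omega> f S \<and> mass \<Omega> f S \<in> {0..1}" using p0 by simp
  qed
  have partA: "is_partition \<Omega> f k A" using assms(9) unfolding is_equilibrium_def by simp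
  have partB: "is_partition \<Omega> f k B" using assms(10) .
  have Al: "\<And>i. i < k \<Longrightarrow> A i \<in> sets lebesgue" using partA unfolding is_partition_def by auto
  have Bl: "\<And>i. i < k \<Longrightarrow> B i \<in> sets lebesgue" using partB unfolding is_partition_def by auto
  define a where "a i = mass \<Omega> f (A i)" for i
  define b where "b i = mass \<Omega> f (B i)" for i
  define E where "E i = {x. \<forall>j<k. j \<noteq> i \<longrightarrow>
            norm (x - xs i) powr p + h i (a i) < norm (x - xs j) powr p + h j (a j)}" for i
  have eqA: "\<forall>i<k. f_ae_eq \<Omega> f (A i) (E i)"
    using assms(9) unfolding is_equilibrium_def E_def a_def by simp
  have ab01: "\<And>i. i < k \<Longrightarrow> a i \<in> {0..1} \<and> b i \<in> {0..1}"
    using ms Al Bl unfolding a_def b_def by blast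
  have neg: "\<And>N. f_negligible \<Omega> f N \<Longrightarrow> AE x in M. x \<notin> N"
    unfolding f_negligible_def M_def by (rule AE_not_in)
  have g1: "AE x in M. x \<in> \<Omega>"
  proof -
    have "-\<Omega> \<in> sets lebesgue" using O by simp
    hence "emeasure M (-\<Omega>) = ennreal (mass \<Omega> f (-\<Omega>))" using em by blast
    also have "mass \<Omega> f (-\<Omega>) = 0" unfolding mass_def set_lebesgue_integral_def by simp
    finally have "-\<Omega> \<in> null_sets M" using O setsM by (auto simp: null_sets_def)
    from AE_not_in[OF this] show ?thesis by simp
  qed
  have pw: "\<And>C. is_partition \<Omega> f k C \<Longrightarrow> AE x in M. \<forall>i\<in>{..<k}. \<forall>j\<in>{..<k}. i \<noteq> j \<longrightarrow> x \<notin> C i \<inter> C j"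
  proof -
    fix C assume C: "is_partition \<Omega> f k C"
    show "AE x in M. \<forall>i\<in>{..<k}. \<forall>j\<in>{..<k}. i \<noteq> j \<longrightarrow> x \<notin> C i \<inter> C j"
    proof (intro eventually_ball_finite ballI finite_lessThan)
      fix i j assume "i \<in> {..<k}" "j \<in> {..<k}"
      show "AE x in M. i \<noteq> j \<longrightarrow> x \<notin> C i \<inter> C j"
      proof (cases "i = j")
        case False
        hence "f_negligible \<Omega> f (C i \<inter> C j)" using C \<open>i \<in> _\<close> \<open>j \<in> _\<close>
          unfolding is_partition_def by auto
        hence "AE x in M. x \<notin> C i \<inter> C j" by (rule neg)
        thus ?thesis by (rule eventually_mono) simp
      qed simp
    qed
  qed
  have cov: "\<And>C. is_partition \<Omega> f k C \<Longrightarrow> AE x in M. x \<notin> \<Omega> - (\<Union>i<k. C i)"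
    using neg unfolding is_partition_def by blast
  have g6: "AE x in M. \<forall>i\<in>{..<k}. x \<in> A i \<longleftrightarrow> x \<in> E i"
  proof (intro eventually_ball_finite ballI finite_lessThan)
    fix i assume "i \<in> {..<k}"
    hence "f_negligible \<Omega> f ((A i - E i) \<union> (E i - A i))" using eqA unfolding f_ae_eq_def by auto
    hence "AE x in M. x \<notin> (A i - E i) \<union> (E i - A i)" by (rule neg)
    thus "AE x in M. x \<in> A i \<longleftrightarrow> x \<in> E i" by (rule eventually_mono) auto
  qed
  have g7: "AE x in M. cost \<Omega> f p k xs h B x \<le> cost \<Omega> f p k xs h A x"
    using assms(11) unfolding M_def .
  define good where "good x \<longleftrightarrow> x \<in> \<Omega> \<and>
     (\<forall>i<k. \<forall>j<k. i \<noteq> j \<longrightarrow> x \<notin> B i \<inter> B j) \<and> (\<exists>i<k. x \<in> B i) \<and>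
     (\<forall>i<k. \<forall>j<k. i \<noteq> j \<longrightarrow> x \<notin> A i \<inter> A j) \<and> (\<exists>i<k. x \<in> A i) \<and>
     (\<forall>i<k. x \<in> A i \<longleftrightarrow> x \<in> E i) \<and> cost \<Omega> f p k xs h B x \<le> cost \<Omega> f p k xs h A x" for x
  have G: "AE x in M. good x"
    using g1 pw[OF partB] cov[OF partB] pw[OF partA] cov[OF partA] g6 g7
    unfolding good_def by eventually_elim auto
  have costB: "\<And>x i. good x \<Longrightarrow> i < k \<Longrightarrow> x \<in> B i \<Longrightarrow>
      cost \<Omega> f p k xs h B x = norm (x - xs i) powr p + h i (b i)"
  proof -
    fix x i assume gx: "good x" "i < k" "x \<in> B i"
    show "cost \<Omega> f p k xs h B x = norm (x - xs i) powr p + h i (b i)"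
      unfolding cost_def b_def
      by (rule sum_single[where c = "\<lambda>l. norm (x - xs l) powr p + h l (mass \<Omega> f (B l))"])
         (use gx in \<open>auto simp: good_def\<close>)
  qed
  have costA: "\<And>x i. good x \<Longrightarrow> i < k \<Longrightarrow> x \<in> A i \<Longrightarrow>
      cost \<Omega> f p k xs h A x = norm (x - xs i) powr p + h i (a i)"
  proof -
    fix x i assume gx: "good x" "i < k" "x \<in> A i"
    show "cost \<Omega> f p k xs h A x = norm (x - xs i) powr p + h i (a i)"
      unfolding cost_def a_def
      by (rule sum_single[where c = "\<lambda>l. norm (x - xs l) powr p + h l (mass \<Omega> f (A l))"])
         (use gx in \<open>auto simp: good_def\<close>)
  qed
  have key: "\<And>x i j. good x \<Longrightarrow> i < k \<Longrightarrow> j < k \<Longrightarrow> x \<in> B i \<Longrightarrow> x \<in> A j \<Longrightarrow>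
      b i \<le> a i \<and> (i \<noteq> j \<longrightarrow> b i < a i)"
  proof -
    fix x i j assume gx: "good x" and ij: "i < k" "j < k" and xB: "x \<in> B i" and xA: "x \<in> A j"
    have c: "norm (x - xs i) powr p + h i (b i) \<le> norm (x - xs j) powr p + h j (a j)"
      using gx costB[OF gx ij(1) xB] costA[OF gx ij(2) xA] unfolding good_def by simp
    have hm: "strict_mono_on {0..1} (h i)" using assms(8) ij by auto
    show "b i \<le> a i \<and> (i \<noteq> j \<longrightarrow> b i < a i)"
    proof (cases "i = j")
      case True
      hence "h i (b i) \<le> h i (a i)" using c by simp
      thus ?thesis using smono_le[OF hm] ab01[OF ij(1)] True by blast
    next
      case False
      have "x \<in> E j" using gx xA ij unfolding good_def by blast
      hence "norm (x - xs j) powr p + h j (a j) < norm (x - xs i) powr p + h i (a i)"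
        unfolding E_def using ij False by auto
      hence "h i (b i) < h i (a i)" using c by simp
      hence "b i < a i" using smono_lt[OF hm] ab01[OF ij(1)] by blast
      thus ?thesis by simp
    qed
  qed
  have ble: "\<And>i. i < k \<Longrightarrow> b i \<le> a i"
  proof -
    fix i assume i: "i < k"
    show "b i \<le> a i"
    proof (cases "emeasure M (B i) = 0")
      case True
      hence "ennreal (b i) = 0" using em[OF Bl[OF i]] unfolding b_def by simp
      hence "b i = 0" using ab01[OF i] by simp
      thus ?thesis using ab01[OF i] by simp
    next
      case False
      then obtain x where x: "x \<in> B i" "good x" using AE_point[OF G] Bl[OF i] setsM by blast
      then obtain j where "j < k" "x \<in> A j" unfolding good_def by blast
      thus ?thesis using key[OF x(2) i _ x(1)] by blast
    qed
  qed
  have sumC: "\<And>C. (\<And>i. i < k \<Longrightarrow> C i \<in> sets lebesgue) \<Longrightarrow>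
      (AE x in M. (\<Sum>i<k. indicator (C i) x) = (1::real)) \<Longrightarrow> (\<Sum>i<k. measure M (C i)) = 1"
  proof -
    fix C assume C: "\<And>i. i < k \<Longrightarrow> C i \<in> sets lebesgue"
      and ae: "AE x in M. (\<Sum>i<k. indicator (C i) x) = (1::real)"
    have CM: "\<And>i. i < k \<Longrightarrow> C i \<in> sets M" using C setsM by auto
    have "(\<Sum>i<k. measure M (C i)) = (\<Sum>i<k. integral\<^sup>L M (indicator (C i)))"
      by (simp add: spaceM)
    also have "\<dots> = integral\<^sup>L M (\<lambda>x. \<Sum>i<k. indicator (C i) x)"
    proof -
      have int: "\<And>i. i < k \<Longrightarrow> integrable M (indicator (C i) :: 'a \<Rightarrow> real)"
        using CM by (auto intro!: integrable_real_indicator simp: less_top[symmetric])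
      have "integral\<^sup>L M (\<lambda>x. \<Sum>i<k. indicator (C i) x :: real) = (\<Sum>i<k. integral\<^sup>L M (indicator (C i)))"
        by (rule Bochner_Integration.integral_sum) (simp add: int)
      then show ?thesis by (rule sym)
    qed
    also have "\<dots> = integral\<^sup>L M (\<lambda>x. 1::real)"
    proof (rule integral_cong_AE)
      show "(\<lambda>x. \<Sum>i<k. indicator (C i) x :: real) \<in> borel_measurable M"
        by (rule borel_measurable_sum, rule borel_measurable_indicator, rule CM) simp
    qed (simp_all add: ae)
    also have "\<dots> = 1" using mU by (simp add: spaceM)
    finally show "(\<Sum>i<k. measure M (C i)) = 1" .
  qed
  have sB: "(\<Sum>i<k. b i) = 1"
  proof -
    have "(\<Sum>i<k. measure M (B i)) = 1"
    proof (rule sumC[OF Bl])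
      show "AE x in M. (\<Sum>i<k. indicator (B i) x) = (1::real)"
        using G
      proof eventually_elim
        case (elim x)
        then obtain i where i: "i < k" "x \<in> B i" unfolding good_def by blast
        have oth: "\<forall>l<k. l \<noteq> i \<longrightarrow> x \<notin> B l" using elim i unfolding good_def by blast
        have "(\<Sum>l<k. 1 * indicator (B l) x) = (1::real)"
          by (rule sum_single[OF i(1) oth i(2)])
        thus ?case by simp
      qed
    qed
    moreover have "\<And>i. i \<in> {..<k} \<Longrightarrow> measure M (B i) = b i" using ms Bl unfolding b_def by blast
    ultimately show ?thesis using sum.cong[of "{..<k}" "{..<k}" "\<lambda>i. measure M (B i)" b] by simp
  qed
  have sA: "(\<Sum>i<k. a i) = 1"
  proof -
    have "(\<Sum>i<k. measure M (A i)) = 1"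
    proof (rule sumC[OF Al])
      show "AE x in M. (\<Sum>i<k. indicator (A i) x) = (1::real)"
        using G
      proof eventually_elim
        case (elim x)
        then obtain i where i: "i < k" "x \<in> A i" unfolding good_def by blast
        have oth: "\<forall>l<k. l \<noteq> i \<longrightarrow> x \<notin> A l" using elim i unfolding good_def by blast
        have "(\<Sum>l<k. 1 * indicator (A l) x) = (1::real)"
          by (rule sum_single[OF i(1) oth i(2)])
        thus ?case by simp
      qed
    qed
    moreover have "\<And>i. i \<in> {..<k} \<Longrightarrow> measure M (A i) = a i" using ms Al unfolding a_def by blast
    ultimately show ?thesis using sum.cong[of "{..<k}" "{..<k}" "\<lambda>i. measure M (A i)" a] by simp
  qed
  have beq: "\<And>i. i < k \<Longrightarrow> b i = a i"
  proof (rule ccontr)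
    fix i assume i: "i < k" and ne: "b i \<noteq> a i"
    hence "b i < a i" using ble[OF i] by simp
    hence "(\<Sum>i<k. b i) < (\<Sum>i<k. a i)"
      using i ble by (intro sum_strict_mono_ex1) auto
    thus False using sA sB by simp
  qed
  have nullBA: "\<And>i j. i < k \<Longrightarrow> j < k \<Longrightarrow> i \<noteq> j \<Longrightarrow> B i \<inter> A j \<in> null_sets M"
  proof -
    fix i j assume ij: "i < k" "j < k" "i \<noteq> j"
    have S: "B i \<inter> A j \<in> sets M" using Bl Al ij setsM by auto
    show "B i \<inter> A j \<in> null_sets M"
    proof (rule ccontr)
      assume "B i \<inter> A j \<notin> null_sets M"
      hence "emeasure M (B i \<inter> A j) \<noteq> 0" using S by auto
      then obtain x where x: "x \<in> B i \<inter> A j" "good x" using AE_point[OF G S] by blast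
      hence "b i < a i" using key[OF x(2) ij(1,2)] ij(3) by blast
      thus False using beq[OF ij(1)] by simp
    qed
  qed
  have G2: "AE x in M. \<forall>i\<in>{..<k}. \<forall>j\<in>{..<k}. i \<noteq> j \<longrightarrow> x \<notin> B i \<inter> A j"
  proof (intro eventually_ball_finite ballI finite_lessThan)
    fix i j assume "i \<in> {..<k}" "j \<in> {..<k}"
    show "AE x in M. i \<noteq> j \<longrightarrow> x \<notin> B i \<inter> A j"
    proof (cases "i = j")
      case False
      hence "B i \<inter> A j \<in> null_sets M" using nullBA \<open>i \<in> _\<close> \<open>j \<in> _\<close> by auto
      hence "AE x in M. x \<notin> B i \<inter> A j" by (rule AE_not_in)
      thus ?thesis by (rule eventually_mono) simp
    qed simp
  qed
  show ?thesis
  proof (intro allI impI)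
    fix i assume i: "i < k"
    let ?D = "(A i - B i) \<union> (B i - A i)"
    have D: "?D \<in> sets M" using Al Bl i setsM by auto
    have "AE x in M. x \<notin> ?D"
      using G G2
    proof eventually_elim
      case (elim x)
      show ?case
      proof
        assume xD: "x \<in> ?D"
        show False
        proof (cases "x \<in> A i")
          case True
          hence "x \<notin> B i" using xD by blast
          moreover obtain l where "l < k" "x \<in> B l" using elim unfolding good_def by blast
          ultimately show False using elim True i by (cases "l = i") auto
        next
          case False
          hence "x \<in> B i" using xD by blast
          moreover obtain j where "j < k" "x \<in> A j" using elim unfolding good_def by blast
          ultimately show False using elim False i by (cases "j = i") auto
        qed
      qed
    qed
    hence "?D \<in> null_sets M" using AE_iff_null_sets[OF D] by simp
    thus "f_ae_eq \<Omega> f (A i) (B i)" unfolding f_ae_eq_def f_negligible_def M_def .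
  qed
qed

end
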